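(* Let $n\ge 1$ and let $P$ be the $n\times n$ permutation matrix of a permutation $\sigma\in S_n$. Then $P$ is the leaf matrix of at least one CNM of size $n$ if and only if $\sigma$ is irreducible.
   Context: A complete non-ambiguous matrix (CNM) of size $n$ is an $n\times n$ matrix $M=(m_{i,j})$ with entries in $\{0,1\}$ whose support $T=\{(i,j): m_{i,j}=1\}$ (whose elements are called vertices) satisfies: (1) $(1,1)\in T$; (2) for every $p=(i,j)\in T$ with $p\neq(1,1)$, exactly one of the following holds: there is $(i',j)\in T$ with $i'<i$, or there is $(i,j')\in T$ with $j'<j$; (3) every row and every column of $M$ contains at least one vertex; (4) define the parent of $p=(i,j)\neq(1,1)$ to be $(i',j)$ with $i'<i$ maximal if such a vertex exists, and otherwise $(i,j')$ with $j'<j$ maximal; then every vertex is the parent of either zero or exactly two vertices. A vertex with no children is a leaf. The leaf matrix $p(M)$ is obtained from $M$ by replacing all non-leaf vertices by $0$ (it is a permutation matrix). A permutation $\sigma\in S_n$ is irreducible if there is no $j$ with $1\le j<n$ such that $\sigma(\{1,\dots,j\})=\{1,\dots,j\}$; the permutation matrix of $\sigma$ has its $1$'s at positions $(i,\sigma(i))$. *)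

theory Defs
  imports "HOL-Combinatorics.Permutations"
begin

text \<open>Matrices of size n are functions nat => nat => nat, indices in {1..n};
  entries outside {1..n} x {1..n} are required to be 0.\<close>

definition support :: "(nat \<Rightarrow> nat \<Rightarrow> nat) \<Rightarrow> (nat \<times> nat) set" where
  "support M = {(i, j). M i j = 1}"

definition cnm_parent :: "(nat \<times> nat) set \<Rightarrow> nat \<times> nat \<Rightarrow> nat \<times> nat" where
  "cnm_parent T p = (case p of (i, j) \<Rightarrow>
     if \<exists>i'<i. (i', j) \<in> T then (Max {i'. i' < i \<and> (i', j) \<in> T}, j)
     else (i, Max {j'. j' < j \<and> (i, j') \<in> T}))"

definition cnm_children :: "(nat \<times> nat) set \<Rightarrow> nat \<times> nat \<Rightarrow> (nat \<times> nat) set" where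
  "cnm_children T p = {q \<in> T. q \<noteq> (1, 1) \<and> cnm_parent T q = p}"

definition is_cnm :: "nat \<Rightarrow> (nat \<Rightarrow> nat \<Rightarrow> nat) \<Rightarrow> bool" where
  "is_cnm n M \<longleftrightarrow>
     (\<forall>i j. M i j \<in> {0, 1}) \<and>
     (\<forall>i j. M i j \<noteq> 0 \<longrightarrow> i \<in> {1..n} \<and> j \<in> {1..n}) \<and>
     (1, 1) \<in> support M \<and>
     (\<forall>(i, j) \<in> support M. (i, j) \<noteq> (1, 1) \<longrightarrow>
        ((\<exists>i'<i. (i', j) \<in> support M) \<noteq> (\<exists>j'<j. (i, j') \<in> support M))) \<and>
     (\<forall>i\<in>{1..n}. \<exists>j. (i, j) \<in> support M) \<and>
     (\<forall>j\<in>{1..n}. \<exists>i. (i, j) \<in> support M) \<and>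
     (\<forall>p \<in> support M. card (cnm_children (support M) p) \<in> {0, 2})"

definition leaf_matrix :: "(nat \<Rightarrow> nat \<Rightarrow> nat) \<Rightarrow> (nat \<Rightarrow> nat \<Rightarrow> nat)" where
  "leaf_matrix M = (\<lambda>i j. if (i, j) \<in> support M \<and> cnm_children (support M) (i, j) = {}
                          then 1 else 0)"

definition perm_matrix :: "nat \<Rightarrow> (nat \<Rightarrow> nat) \<Rightarrow> (nat \<Rightarrow> nat \<Rightarrow> nat)" where
  "perm_matrix n \<sigma> = (\<lambda>i j. if i \<in> {1..n} \<and> j = \<sigma> i then 1 else 0)"

definition irreducible_perm :: "nat \<Rightarrow> (nat \<Rightarrow> nat) \<Rightarrow> bool" where
  "irreducible_perm n \<sigma> \<longleftrightarrow> \<not> (\<exists>j. 1 \<le> j \<and> j < n \<and> \<sigma> ` {1..j} = {1..j})"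

end

theory Submission
  imports Defs
begin

definition Hcond :: "(nat \<times> nat) set \<Rightarrow> bool" where
  "Hcond T \<longleftrightarrow> (\<forall>(i, j) \<in> T. (i, j) \<noteq> (1, 1) \<longrightarrow>
        ((\<exists>i'<i. (i', j) \<in> T) \<noteq> (\<exists>j'<j. (i, j') \<in> T)))"

lemma parent_iff:
  assumes fin: "finite T" and H: "Hcond T"
    and q: "(a,b) \<in> T" "(a,b) \<noteq> (1,1)" and p: "(i,j) \<in> T"
  shows "cnm_parent T (a,b) = (i,j) \<longleftrightarrow>
     (b = j \<and> i < a \<and> (\<forall>x. i<x \<and> x<a \<longrightarrow> (x,j)\<notin>T)) \<or>
     (a = i \<and> j < b \<and> (\<forall>y. j<y \<and> y<b \<longrightarrow> (i,y)\<notin>T))"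
proof (cases "\<exists>i'<a. (i',b)\<in>T")
  case True
  let ?S = "{i'. i'<a \<and> (i',b)\<in>T}"
  have finS: "finite ?S" by (rule finite_subset[of _ "{..<a}"]) auto
  have neS: "?S \<noteq> {}" using True by auto
  have par: "cnm_parent T (a,b) = (Max ?S, b)" using True by (simp add: cnm_parent_def)
  have noleft: "\<not>(\<exists>j'<b. (a,j')\<in>T)" using H q True unfolding Hcond_def by blast
  show ?thesis
  proof
    assume A: "cnm_parent T (a,b) = (i,j)"
    hence bj: "b = j" and iM: "i = Max ?S" using par by auto
    then have "i \<in> ?S" using Max_in[OF finS neS] by simp
    moreover have "\<forall>x. i<x \<and> x<a \<longrightarrow> (x,j)\<notin>T"
    proof (intro allI impI)
      fix x assume "i<x \<and> x<a"
      then show "(x,j)\<notin>T"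
      proof -
        assume x: "i<x \<and> x<a"
        show ?thesis
        proof
          assume "(x,j)\<in>T"
          then have "x \<in> ?S" using x bj by auto
          then have "x \<le> Max ?S" using Max_ge[OF finS] by blast
          then show False using x iM by simp
        qed
      qed
    qed
    ultimately show "(b = j \<and> i < a \<and> (\<forall>x. i<x \<and> x<a \<longrightarrow> (x,j)\<notin>T)) \<or>
     (a = i \<and> j < b \<and> (\<forall>y. j<y \<and> y<b \<longrightarrow> (i,y)\<notin>T))" using bj by auto
  next
    assume "(b = j \<and> i < a \<and> (\<forall>x. i<x \<and> x<a \<longrightarrow> (x,j)\<notin>T)) \<or>
     (a = i \<and> j < b \<and> (\<forall>y. j<y \<and> y<b \<longrightarrow> (i,y)\<notin>T))"
    then show "cnm_parent T (a,b) = (i,j)"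
    proof
      assume A: "b = j \<and> i < a \<and> (\<forall>x. i<x \<and> x<a \<longrightarrow> (x,j)\<notin>T)"
      have "Max ?S = i"
      proof (rule Max_eqI[OF finS])
        fix y assume "y \<in> ?S" then show "y \<le> i" using A by (metis (mono_tags, lifting) mem_Collect_eq not_le_imp_less)
      next
        show "i \<in> ?S" using A p by auto
      qed
      then show ?thesis using par A by simp
    next
      assume "a = i \<and> j < b \<and> (\<forall>y. j<y \<and> y<b \<longrightarrow> (i,y)\<notin>T)"
      then have "\<exists>j'<b. (a,j')\<in>T" using p by auto
      with noleft show ?thesis by blast
    qed
  qed
next
  case False
  let ?S = "{j'. j'<b \<and> (a,j')\<in>T}"
  have finS: "finite ?S" by (rule finite_subset[of _ "{..<b}"]) auto
  have left: "\<exists>j'<b. (a,j')\<in>T" using H q False unfolding Hcond_def by blast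
  have neS: "?S \<noteq> {}" using left by auto
  have par: "cnm_parent T (a,b) = (a, Max ?S)" unfolding cnm_parent_def prod.case if_not_P[OF False] by simp
  show ?thesis
  proof
    assume A: "cnm_parent T (a,b) = (i,j)"
    hence ai: "a = i" and jM: "j = Max ?S" using par by auto
    then have "j \<in> ?S" using Max_in[OF finS neS] by simp
    moreover have "\<forall>y. j<y \<and> y<b \<longrightarrow> (i,y)\<notin>T"
    proof (intro allI impI)
      fix y assume "j<y \<and> y<b"
      then show "(i,y)\<notin>T"
      proof -
        assume y: "j<y \<and> y<b"
        show ?thesis
        proof
          assume "(i,y)\<in>T"
          then have "y \<in> ?S" using y ai by auto
          then have "y \<le> Max ?S" using Max_ge[OF finS] by blast
          then show False using y jM by simp
        qed
      qed
    qed
    ultimately show "(b = j \<and> i < a \<and> (\<forall>x. i<x \<and> x<a \<longrightarrow> (x,j)\<notin>T)) \<or>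
     (a = i \<and> j < b \<and> (\<forall>y. j<y \<and> y<b \<longrightarrow> (i,y)\<notin>T))" using ai by auto
  next
    assume "(b = j \<and> i < a \<and> (\<forall>x. i<x \<and> x<a \<longrightarrow> (x,j)\<notin>T)) \<or>
     (a = i \<and> j < b \<and> (\<forall>y. j<y \<and> y<b \<longrightarrow> (i,y)\<notin>T))"
    then show "cnm_parent T (a,b) = (i,j)"
    proof
      assume "b = j \<and> i < a \<and> (\<forall>x. i<x \<and> x<a \<longrightarrow> (x,j)\<notin>T)"
      then have "\<exists>i'<a. (i',b)\<in>T" using p by auto
      with False show ?thesis by blast
    next
      assume A: "a = i \<and> j < b \<and> (\<forall>y. j<y \<and> y<b \<longrightarrow> (i,y)\<notin>T)"
      have "Max ?S = j"
      proof (rule Max_eqI[OF finS])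
        fix y assume "y \<in> ?S" then show "y \<le> j" using A by (metis (mono_tags, lifting) mem_Collect_eq not_le_imp_less)
      next
        show "j \<in> ?S" using A p by auto
      qed
      then show ?thesis using par A by simp
    qed
  qed
qed

lemma card_children:
  assumes fin: "finite T" and H: "Hcond T" and pos: "\<forall>(x,y)\<in>T. 1 \<le> x \<and> 1 \<le> y"
    and p: "(i,j) \<in> T"
  shows "card (cnm_children T (i,j)) =
    (if \<exists>a>i. (a,j)\<in>T then 1 else 0) + (if \<exists>b>j. (i,b)\<in>T then 1 else 0)"
proof -
  define D where "D = {q\<in>T. snd q = j \<and> i < fst q \<and> (\<forall>x. i<x \<and> x<fst q \<longrightarrow> (x,j)\<notin>T)}"
  define R where "R = {q\<in>T. fst q = i \<and> j < snd q \<and> (\<forall>y. j<y \<and> y<snd q \<longrightarrow> (i,y)\<notin>T)}"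
  have ch: "cnm_children T (i,j) = D \<union> R"
  proof (rule set_eqI)
    fix q show "q \<in> cnm_children T (i,j) \<longleftrightarrow> q \<in> D \<union> R"
    proof (cases q)
      case (Pair a b)
      show ?thesis
      proof (cases "q \<in> T \<and> q \<noteq> (1,1)")
        case True
        then show ?thesis using parent_iff[OF fin H _ _ p, of a b] Pair
          unfolding cnm_children_def D_def R_def by auto
      next
        case False
        moreover have "q \<in> T \<Longrightarrow> q \<noteq> (1,1)" if "q \<in> D \<union> R"
          using that p pos unfolding D_def R_def by auto
        ultimately show ?thesis unfolding cnm_children_def D_def R_def by auto
      qed
    qed
  qed
  have disj: "D \<inter> R = {}" unfolding D_def R_def by auto
  have finD: "finite D" "finite R" unfolding D_def R_def using fin by auto
  have cD: "card D = (if \<exists>a>i. (a,j)\<in>T then 1 else 0)"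
  proof (cases "\<exists>a>i. (a,j)\<in>T")
    case True
    let ?A = "{a. i<a \<and> (a,j)\<in>T}"
    have "?A \<subseteq> fst ` T" by force
    then have finA: "finite ?A" using fin finite_subset by blast
    have neA: "?A \<noteq> {}" using True by auto
    define m where "m = Min ?A"
    have mA: "m \<in> ?A" using Min_in[OF finA neA] m_def by simp
    have mle: "\<And>x. x \<in> ?A \<Longrightarrow> m \<le> x" using Min_le[OF finA] m_def by simp
    have "D = {(m,j)}"
    proof (rule set_eqI)
      fix q show "q \<in> D \<longleftrightarrow> q \<in> {(m,j)}"
      proof
        assume "q \<in> D"
        then obtain a where q: "q = (a,j)" "i < a" "(a,j) \<in> T" "\<forall>x. i<x \<and> x<a \<longrightarrow> (x,j)\<notin>T"
          unfolding D_def by (cases q) auto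
        have "m \<le> a" using mle q by auto
        moreover have "\<not> m < a" using q mA by auto
        ultimately show "q \<in> {(m,j)}" using q by auto
      next
        assume "q \<in> {(m,j)}"
        then show "q \<in> D" using mA mle unfolding D_def by force
      qed
    qed
    then show ?thesis using True by simp
  next
    case False
    then have "D = {}" unfolding D_def by force
    then show ?thesis using False by simp
  qed
  have cR: "card R = (if \<exists>b>j. (i,b)\<in>T then 1 else 0)"
  proof (cases "\<exists>b>j. (i,b)\<in>T")
    case True
    let ?A = "{b. j<b \<and> (i,b)\<in>T}"
    have "?A \<subseteq> snd ` T" by force
    then have finA: "finite ?A" using fin finite_subset by blast
    have neA: "?A \<noteq> {}" using True by auto
    define m where "m = Min ?A"
    have mA: "m \<in> ?A" using Min_in[OF finA neA] m_def by simp
    have mle: "\<And>x. x \<in> ?A \<Longrightarrow> m \<le> x" using Min_le[OF finA] m_def by simp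
    have "R = {(i,m)}"
    proof (rule set_eqI)
      fix q show "q \<in> R \<longleftrightarrow> q \<in> {(i,m)}"
      proof
        assume "q \<in> R"
        then obtain b where q: "q = (i,b)" "j < b" "(i,b) \<in> T" "\<forall>y. j<y \<and> y<b \<longrightarrow> (i,y)\<notin>T"
          unfolding R_def by (cases q) auto
        have "m \<le> b" using mle q by auto
        moreover have "\<not> m < b" using q mA by auto
        ultimately show "q \<in> {(i,m)}" using q by auto
      next
        assume "q \<in> {(i,m)}"
        then show "q \<in> R" using mA mle unfolding R_def by force
      qed
    qed
    then show ?thesis using True by simp
  next
    case False
    then have "R = {}" unfolding R_def by force
    then show ?thesis using False by simp
  qed
  show ?thesis using ch disj finD cD cR by (simp add: card_Un_disjoint)
qed


lemma cnm_facts: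
  assumes "is_cnm n M"
  shows "finite (support M)" "Hcond (support M)"
    "\<forall>(x,y)\<in>support M. x \<in> {1..n} \<and> y \<in> {1..n}"
    "\<forall>p \<in> support M. card (cnm_children (support M) p) \<in> {0, 2}"
    "(1,1) \<in> support M"
    "\<forall>i\<in>{1..n}. \<exists>j. (i, j) \<in> support M"
    "\<forall>j\<in>{1..n}. \<exists>i. (i, j) \<in> support M"
proof -
  note D = assms[unfolded is_cnm_def]
  have c2: "\<forall>i j. M i j \<noteq> 0 \<longrightarrow> i \<in> {1..n} \<and> j \<in> {1..n}" using D[THEN conjunct2, THEN conjunct1] .
  show sub: "\<forall>(x,y)\<in>support M. x \<in> {1..n} \<and> y \<in> {1..n}"
  proof (clarify)
    fix x y assume "(x,y) \<in> support M"
    then have "M x y \<noteq> 0" unfolding support_def by simp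
    then show "x \<in> {1..n} \<and> y \<in> {1..n}" using c2 by blast
  qed
  have "support M \<subseteq> {1..n} \<times> {1..n}" using sub by auto
  then show "finite (support M)" by (rule finite_subset) auto
  show "Hcond (support M)" unfolding Hcond_def using D[THEN conjunct2, THEN conjunct2, THEN conjunct2, THEN conjunct1] .
  show "\<forall>p \<in> support M. card (cnm_children (support M) p) \<in> {0, 2}"
    "(1,1) \<in> support M"
    "\<forall>i\<in>{1..n}. \<exists>j. (i, j) \<in> support M"
    "\<forall>j\<in>{1..n}. \<exists>i. (i, j) \<in> support M"
    using D[THEN conjunct2, THEN conjunct2, THEN conjunct2, THEN conjunct2, THEN conjunct2, THEN conjunct2]
      D[THEN conjunct2, THEN conjunct2, THEN conjunct1]
      D[THEN conjunct2, THEN conjunct2, THEN conjunct2, THEN conjunct2, THEN conjunct1]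
      D[THEN conjunct2, THEN conjunct2, THEN conjunct2, THEN conjunct2, THEN conjunct2, THEN conjunct1]
    by simp_all
qed

lemma leaf_iff:
  assumes fin: "finite T" and H: "Hcond T" and pos: "\<forall>(x,y)\<in>T. 1 \<le> x \<and> 1 \<le> y"
    and p: "(i,j) \<in> T"
  shows "cnm_children T (i,j) = {} \<longleftrightarrow> \<not>(\<exists>a>i. (a,j)\<in>T) \<and> \<not>(\<exists>b>j. (i,b)\<in>T)"
proof -
  have "finite (cnm_children T (i,j))" using fin unfolding cnm_children_def by auto
  then have "cnm_children T (i,j) = {} \<longleftrightarrow> card (cnm_children T (i,j)) = 0" by simp
  then show ?thesis using card_children[OF fin H pos p] by auto
qed

lemma dir1:
  assumes perm: "\<sigma> permutes {1..n}" and cnm: "is_cnm n M"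
    and leaf: "leaf_matrix M = perm_matrix n \<sigma>"
  shows "irreducible_perm n \<sigma>"
proof -
  define T where "T = support M"
  note F = cnm_facts[OF cnm, folded T_def]
  have pos: "\<forall>(x,y)\<in>T. 1 \<le> x \<and> 1 \<le> y" using F(3) by auto
  have binary: "\<And>i j. (i,j)\<in>T \<Longrightarrow> (\<exists>a>i. (a,j)\<in>T) \<longleftrightarrow> (\<exists>b>j. (i,b)\<in>T)"
  proof -
    fix i j assume p: "(i,j)\<in>T"
    then show "(\<exists>a>i. (a,j)\<in>T) \<longleftrightarrow> (\<exists>b>j. (i,b)\<in>T)"
      using card_children[OF F(1) F(2) pos p] F(4) by (auto split: if_splits)
  qed
  have isleaf: "\<And>i j. (i,j)\<in>T \<Longrightarrow> \<not>(\<exists>a>i. (a,j)\<in>T) \<Longrightarrow> \<not>(\<exists>b>j. (i,b)\<in>T) \<Longrightarrow>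
     i \<in> {1..n} \<and> j = \<sigma> i"
  proof -
    fix i j assume p: "(i,j)\<in>T" and "\<not>(\<exists>a>i. (a,j)\<in>T)" "\<not>(\<exists>b>j. (i,b)\<in>T)"
    then have "cnm_children T (i,j) = {}" using leaf_iff[OF F(1) F(2) pos p] by simp
    then have "leaf_matrix M i j = 1" using p unfolding leaf_matrix_def T_def by simp
    then have pm: "perm_matrix n \<sigma> i j = 1" using leaf by simp
    have "perm_matrix n \<sigma> i j = (if i \<in> {1..n} \<and> j = \<sigma> i then 1 else 0)" by (simp only: perm_matrix_def)
    with pm show "i \<in> {1..n} \<and> j = \<sigma> i" by (metis zero_neq_one)
  qed
  have rowb: "\<And>i c. (i,c)\<in>T \<Longrightarrow> c \<le> \<sigma> i"
  proof -
    fix i c assume ic: "(i,c)\<in>T"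
    let ?C = "{c. (i,c)\<in>T}"
    have "?C \<subseteq> snd ` T" by force
    then have finC: "finite ?C" using F(1) finite_subset by blast
    define cm where "cm = Max ?C"
    have cmC: "(i,cm)\<in>T" using Max_in[OF finC] ic cm_def by auto
    have cge: "c \<le> cm" using Max_ge[OF finC] ic cm_def by auto
    have nr: "\<not>(\<exists>b>cm. (i,b)\<in>T)" using Max_ge[OF finC] cm_def by (metis (no_types, lifting) mem_Collect_eq not_le)
    then have "\<not>(\<exists>a>i. (a,cm)\<in>T)" using binary[OF cmC] by simp
    then have "cm = \<sigma> i" using isleaf[OF cmC _ nr] by simp
    then show "c \<le> \<sigma> i" using cge by simp
  qed
  have colb: "\<And>a c. (a,c)\<in>T \<Longrightarrow> \<exists>k\<in>{1..n}. \<sigma> k = c \<and> a \<le> k"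
  proof -
    fix a c assume ac: "(a,c)\<in>T"
    let ?C = "{a. (a,c)\<in>T}"
    have "?C \<subseteq> fst ` T" by force
    then have finC: "finite ?C" using F(1) finite_subset by blast
    define am where "am = Max ?C"
    have amC: "(am,c)\<in>T" using Max_in[OF finC] ac am_def by auto
    have age: "a \<le> am" using Max_ge[OF finC] ac am_def by auto
    have nb: "\<not>(\<exists>x>am. (x,c)\<in>T)" using Max_ge[OF finC] am_def by (metis (no_types, lifting) mem_Collect_eq not_le)
    then have "\<not>(\<exists>b>c. (am,b)\<in>T)" using binary[OF amC] by simp
    then have "am \<in> {1..n} \<and> c = \<sigma> am" using isleaf[OF amC nb] by simp
    then show "\<exists>k\<in>{1..n}. \<sigma> k = c \<and> a \<le> k" using age by auto
  qed
  show ?thesis unfolding irreducible_perm_def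
  proof
    assume "\<exists>j. 1 \<le> j \<and> j < n \<and> \<sigma> ` {1..j} = {1..j}"
    then obtain j where j: "1 \<le> j" "j < n" "\<sigma> ` {1..j} = {1..j}" by blast
    have "Suc j \<in> {1..n}" using j by auto
    then obtain c where c: "(Suc j, c) \<in> T" using F(6) by blast
    let ?C = "{c. (Suc j,c)\<in>T}"
    have "?C \<subseteq> snd ` T" by force
    then have finC: "finite ?C" using F(1) finite_subset by blast
    define c0 where "c0 = Min ?C"
    have c0T: "(Suc j, c0)\<in>T" using Min_in[OF finC] c c0_def by auto
    have noleft: "\<not>(\<exists>j'<c0. (Suc j, j')\<in>T)" using Min_le[OF finC] c0_def by (metis (no_types, lifting) mem_Collect_eq not_le)
    have "(Suc j, c0) \<noteq> (1,1)" using j by auto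
    then have "(\<exists>i'<Suc j. (i', c0) \<in> T) \<noteq> (\<exists>j'<c0. (Suc j, j') \<in> T)"
      using F(2) c0T unfolding Hcond_def by blast
    then obtain a where a: "a < Suc j" "(a,c0)\<in>T" using noleft by blast
    have "a \<in> {1..j}" using a pos by auto
    then have "\<sigma> a \<in> {1..j}" using j(3) by blast
    then have "c0 \<le> j" using rowb[OF a(2)] by auto
    moreover have "c0 \<ge> 1" using c0T pos by auto
    ultimately have "c0 \<in> \<sigma> ` {1..j}" using j(3) by auto
    then obtain k' where k': "k' \<in> {1..j}" "\<sigma> k' = c0" by auto
    obtain k where k: "k\<in>{1..n}" "\<sigma> k = c0" "Suc j \<le> k" using colb[OF c0T] by blast
    have "inj_on \<sigma> {1..n}" using perm permutes_inj_on by blast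
    then have "k = k'" using k k' j by (auto dest: inj_onD)
    then show False using k k' by auto
  qed
qed


lemma perm_surj:
  assumes "\<sigma> permutes {1..n}" "c \<in> {1..n}"
  shows "\<exists>k\<in>{1..n}. \<sigma> k = c"
proof -
  have "\<sigma> ` {1..n} = {1..n}" using assms(1) permutes_image by blast
  then show ?thesis using assms(2) by (metis imageE)
qed

lemma suff:
  assumes perm: "\<sigma> permutes {1..n}"
    and sub: "\<forall>(x,y)\<in>T. x \<in> {1..n} \<and> y \<in> {1..n}"
    and S1: "(1,1) \<in> T"
    and S2: "\<forall>i\<in>{1..n}. (i, \<sigma> i) \<in> T"
    and S3: "\<forall>(i,c)\<in>T. c \<le> \<sigma> i"
    and S4: "\<forall>(i,c)\<in>T. \<forall>i'. 1 \<le> i' \<and> i' < i \<longrightarrow> \<sigma> i' \<noteq> c"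
    and H: "Hcond T"
  shows "is_cnm n (\<lambda>i j. if (i,j)\<in>T then 1 else 0) \<and>
         leaf_matrix (\<lambda>i j. if (i,j)\<in>T then 1 else 0) = perm_matrix n \<sigma>"
proof -
  define M :: "nat \<Rightarrow> nat \<Rightarrow> nat" where "M = (\<lambda>i j. if (i,j)\<in>T then 1 else 0)"
  have supp: "support M = T" unfolding support_def M_def by auto
  have "T \<subseteq> {1..n} \<times> {1..n}" using sub by auto
  then have fin: "finite T" by (rule finite_subset) auto
  have pos: "\<forall>(x,y)\<in>T. 1 \<le> x \<and> 1 \<le> y" using sub by auto
  have right: "\<And>i c. (i,c)\<in>T \<Longrightarrow> (\<exists>b>c. (i,b)\<in>T) \<longleftrightarrow> c \<noteq> \<sigma> i"
  proof -
    fix i c assume ic: "(i,c)\<in>T"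
    show "(\<exists>b>c. (i,b)\<in>T) \<longleftrightarrow> c \<noteq> \<sigma> i"
    proof
      assume "\<exists>b>c. (i,b)\<in>T"
      then obtain b where "b > c" "(i,b)\<in>T" by blast
      then show "c \<noteq> \<sigma> i" using S3 by fastforce
    next
      assume "c \<noteq> \<sigma> i"
      moreover have "c \<le> \<sigma> i" using S3 ic by fastforce
      moreover have "(i, \<sigma> i) \<in> T" using S2 sub ic by fastforce
      ultimately show "\<exists>b>c. (i,b)\<in>T" by (intro exI[of _ "\<sigma> i"]) auto
    qed
  qed
  have below: "\<And>i c. (i,c)\<in>T \<Longrightarrow> (\<exists>a>i. (a,c)\<in>T) \<longleftrightarrow> c \<noteq> \<sigma> i"
  proof -
    fix i c assume ic: "(i,c)\<in>T"
    have i1: "1 \<le> i" using pos ic by auto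
    show "(\<exists>a>i. (a,c)\<in>T) \<longleftrightarrow> c \<noteq> \<sigma> i"
    proof
      assume "\<exists>a>i. (a,c)\<in>T"
      then obtain a where "a > i" "(a,c)\<in>T" by blast
      then show "c \<noteq> \<sigma> i" using S4 i1 by fastforce
    next
      assume ne: "c \<noteq> \<sigma> i"
      have "c \<in> {1..n}" using sub ic by auto
      then obtain k where k: "k\<in>{1..n}" "\<sigma> k = c" using perm_surj[OF perm] by blast
      have "\<not> k < i" using S4 ic k by fastforce
      moreover have "k \<noteq> i" using k ne by auto
      ultimately have "k > i" by simp
      moreover have "(k,c)\<in>T" using S2 k by auto
      ultimately show "\<exists>a>i. (a,c)\<in>T" by blast
    qed
  qed
  have cards: "\<forall>p \<in> support M. card (cnm_children (support M) p) \<in> {0, 2}"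
  proof
    fix p assume "p \<in> support M"
    then obtain i c where p: "p = (i,c)" "(i,c)\<in>T" using supp by (cases p) auto
    show "card (cnm_children (support M) p) \<in> {0, 2}"
      using card_children[OF fin H pos p(2)] right[OF p(2)] below[OF p(2)] p(1) supp by simp
  qed
  have cnm: "is_cnm n M"
    unfolding is_cnm_def
  proof (intro conjI)
    show "\<forall>i j. M i j \<in> {0, 1}" unfolding M_def by simp
    show "\<forall>i j. M i j \<noteq> 0 \<longrightarrow> i \<in> {1..n} \<and> j \<in> {1..n}" unfolding M_def using sub by auto
    show "(1, 1) \<in> support M" using supp S1 by simp
    show "\<forall>(i, j)\<in>support M. (i, j) \<noteq> (1, 1) \<longrightarrow>
        (\<exists>i'<i. (i', j) \<in> support M) \<noteq> (\<exists>j'<j. (i, j') \<in> support M)"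
      using H unfolding supp Hcond_def .
    show "\<forall>i\<in>{1..n}. \<exists>j. (i, j) \<in> support M" using S2 supp by auto
    show "\<forall>j\<in>{1..n}. \<exists>i. (i, j) \<in> support M"
    proof
      fix j assume "j \<in> {1..n}"
      then obtain k where "k\<in>{1..n}" "\<sigma> k = j" using perm_surj[OF perm] by blast
      then show "\<exists>i. (i, j) \<in> support M" using S2 supp by auto
    qed
    show "\<forall>p\<in>support M. card (cnm_children (support M) p) \<in> {0, 2}" by (rule cards)
  qed
  have leaf: "leaf_matrix M = perm_matrix n \<sigma>"
  proof (intro ext)
    fix i j
    have "((i,j) \<in> T \<and> cnm_children T (i,j) = {}) \<longleftrightarrow> (i \<in> {1..n} \<and> j = \<sigma> i)"
    proof
      assume A: "(i,j) \<in> T \<and> cnm_children T (i,j) = {}"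
      then have "j = \<sigma> i" using leaf_iff[OF fin H pos, of i j] right[of i j] by auto
      moreover have "i \<in> {1..n}" using A sub by auto
      ultimately show "i \<in> {1..n} \<and> j = \<sigma> i" by simp
    next
      assume A: "i \<in> {1..n} \<and> j = \<sigma> i"
      then have ij: "(i,j)\<in>T" using S2 by auto
      then show "(i,j) \<in> T \<and> cnm_children T (i,j) = {}"
        using leaf_iff[OF fin H pos ij] right[OF ij] below[OF ij] A by auto
    qed
    then show "leaf_matrix M i j = perm_matrix n \<sigma> i j"
      unfolding leaf_matrix_def perm_matrix_def supp by simp
  qed
  show ?thesis using cnm leaf unfolding M_def by simp
qed


definition topset :: "nat \<Rightarrow> (nat \<Rightarrow> nat) \<Rightarrow> (nat \<times> nat) set" where
  "topset n \<sigma> = {(i,c). i \<in> {1..n} \<and> 1 \<le> c \<and> c \<le> \<sigma> i \<and> (\<forall>i'. 1 \<le> i' \<and> i' < i \<longrightarrow> \<sigma> i' < c)}"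

definition cand :: "(nat \<Rightarrow> nat) \<Rightarrow> nat \<Rightarrow> nat set" where
  "cand \<sigma> i = {c. 1 \<le> c \<and> c \<le> \<sigma> i \<and> (\<exists>i'. 1 \<le> i' \<and> i' < i \<and> c \<le> \<sigma> i') \<and>
                   (\<forall>i'. 1 \<le> i' \<and> i' < i \<longrightarrow> \<sigma> i' \<noteq> c)}"

definition lft :: "(nat \<Rightarrow> nat) \<Rightarrow> nat \<Rightarrow> nat" where
  "lft \<sigma> i = Max (cand \<sigma> i)"

definition Tc :: "nat \<Rightarrow> (nat \<Rightarrow> nat) \<Rightarrow> (nat \<times> nat) set" where
  "Tc n \<sigma> = topset n \<sigma> \<union> {(i, lft \<sigma> i) | i. 2 \<le> i \<and> i \<le> n}"

lemma cand_fin: "finite (cand \<sigma> i)"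
  by (rule finite_subset[of _ "{..\<sigma> i}"]) (auto simp: cand_def)

lemma cand_ne:
  assumes perm: "\<sigma> permutes {1..n}" and irr: "irreducible_perm n \<sigma>"
    and i: "2 \<le> i" "i \<le> n"
  shows "cand \<sigma> i \<noteq> {}"
proof (cases "\<exists>i'. 1 \<le> i' \<and> i' < i \<and> \<sigma> i \<le> \<sigma> i'")
  case True
  then obtain i' where i': "1 \<le> i'" "i' < i" "\<sigma> i \<le> \<sigma> i'" by blast
  have inj: "inj_on \<sigma> {1..n}" using perm permutes_inj_on by blast
  have "\<sigma> i \<in> {1..n}" using perm i permutes_in_image by fastforce
  moreover have "\<forall>i''. 1 \<le> i'' \<and> i'' < i \<longrightarrow> \<sigma> i'' \<noteq> \<sigma> i"
    using inj i by (auto dest: inj_onD)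
  ultimately have "\<sigma> i \<in> cand \<sigma> i" unfolding cand_def using i' by auto
  then show ?thesis by blast
next
  case False
  define j where "j = i - 1"
  have j: "1 \<le> j" "j < n" "i = Suc j" using i unfolding j_def by auto
  have ne: "\<sigma> ` {1..j} \<noteq> {1..j}" using irr j unfolding irreducible_perm_def by blast
  have inj: "inj_on \<sigma> {1..j}" using perm permutes_inj_on by blast
  have cardim: "card (\<sigma> ` {1..j}) = j" using card_image[OF inj] by simp
  have "\<not> \<sigma> ` {1..j} \<subseteq> {1..j}"
  proof
    assume "\<sigma> ` {1..j} \<subseteq> {1..j}"
    then have "\<sigma> ` {1..j} = {1..j}" using card_seteq[of "{1..j}" "\<sigma> ` {1..j}"] cardim by simp
    then show False using ne by simp
  qed
  then obtain i' where i': "i' \<in> {1..j}" "\<sigma> i' \<notin> {1..j}" by blast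
  have "\<sigma> i' \<in> {1..n}" using perm i' j permutes_in_image by fastforce
  then have si': "\<sigma> i' \<ge> i" using i' j by auto
  have "\<not> {1..j} \<subseteq> \<sigma> ` {1..j}"
  proof
    assume "{1..j} \<subseteq> \<sigma> ` {1..j}"
    then have "{1..j} = \<sigma> ` {1..j}" using card_seteq[of "\<sigma> ` {1..j}" "{1..j}"] cardim by simp
    then show False using ne by simp
  qed
  then obtain c where c: "c \<in> {1..j}" "c \<notin> \<sigma> ` {1..j}" by blast
  have "i' < i" using i' j by auto
  then have "\<sigma> i' < \<sigma> i" using False i' j by (meson atLeastAtMost_iff not_le)
  then have "c \<in> cand \<sigma> i" unfolding cand_def using c i' j si'
    by (auto intro!: exI[of _ i'] simp: image_iff)
  then show ?thesis by blast
qed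

lemma lft_props:
  assumes perm: "\<sigma> permutes {1..n}" and irr: "irreducible_perm n \<sigma>"
    and i: "2 \<le> i" "i \<le> n"
  shows "lft \<sigma> i \<in> cand \<sigma> i"
  unfolding lft_def using Max_in[OF cand_fin cand_ne[OF assms]] .

lemma lft_max: "c \<in> cand \<sigma> i \<Longrightarrow> c \<le> lft \<sigma> i"
  unfolding lft_def using Max_ge[OF cand_fin] .


lemma dir2:
  assumes n1: "n \<ge> 1" and perm: "\<sigma> permutes {1..n}" and irr: "irreducible_perm n \<sigma>"
  shows "\<exists>M. is_cnm n M \<and> leaf_matrix M = perm_matrix n \<sigma>"
proof -
  define T where "T = Tc n \<sigma>"
  have inr: "\<And>i. i \<in> {1..n} \<Longrightarrow> \<sigma> i \<in> {1..n}" by (simp only: permutes_in_image[OF perm])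
  have inj: "inj_on \<sigma> {1..n}" using perm permutes_inj_on by blast
  have LC: "\<And>i. 2 \<le> i \<Longrightarrow> i \<le> n \<Longrightarrow> lft \<sigma> i \<in> cand \<sigma> i" using lft_props[OF perm irr] by blast
  have memT: "\<And>x y. (x,y) \<in> T \<longleftrightarrow> (x,y) \<in> topset n \<sigma> \<or> (2 \<le> x \<and> x \<le> n \<and> y = lft \<sigma> x)"
    unfolding T_def Tc_def by auto
  have sub: "\<forall>(x,y)\<in>T. x \<in> {1..n} \<and> y \<in> {1..n}"
  proof (clarify)
    fix x y assume "(x,y)\<in>T"
    then consider "(x,y) \<in> topset n \<sigma>" | "2 \<le> x" "x \<le> n" "y = lft \<sigma> x" using memT by blast
    then show "x \<in> {1..n} \<and> y \<in> {1..n}"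
    proof cases
      case 1 then show ?thesis unfolding topset_def using inr by fastforce
    next
      case 2
      then have "y \<in> cand \<sigma> x" using LC by simp
      moreover have "\<sigma> x \<le> n" using inr 2 by auto
      ultimately show ?thesis using 2 unfolding cand_def by auto
    qed
  qed
  have S1: "(1,1) \<in> T"
  proof -
    have "\<sigma> 1 \<ge> 1" using inr n1 by auto
    then show ?thesis unfolding memT topset_def using n1 by auto
  qed
  have S2: "\<forall>i\<in>{1..n}. (i, \<sigma> i) \<in> T"
  proof
    fix i assume i: "i \<in> {1..n}"
    show "(i, \<sigma> i) \<in> T"
    proof (cases "\<forall>i'. 1 \<le> i' \<and> i' < i \<longrightarrow> \<sigma> i' < \<sigma> i")
      case True
      then show ?thesis unfolding memT topset_def using i inr by auto
    next
      case False
      then obtain i' where i': "1 \<le> i'" "i' < i" "\<sigma> i \<le> \<sigma> i'" by (auto simp: not_less)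
      have "\<forall>i''. 1 \<le> i'' \<and> i'' < i \<longrightarrow> \<sigma> i'' \<noteq> \<sigma> i"
        using inj i by (auto dest: inj_onD)
      then have "\<sigma> i \<in> cand \<sigma> i" unfolding cand_def using i' i inr by fastforce
      then have "\<sigma> i \<le> lft \<sigma> i" by (rule lft_max)
      moreover have "2 \<le> i" using i' by auto
      moreover have "lft \<sigma> i \<le> \<sigma> i" using LC[of i] i calculation(2) unfolding cand_def by auto
      ultimately show ?thesis unfolding memT using i by auto
    qed
  qed
  have S3: "\<forall>(i,c)\<in>T. c \<le> \<sigma> i"
  proof (clarify)
    fix i c assume "(i,c)\<in>T"
    then consider "(i,c) \<in> topset n \<sigma>" | "2 \<le> i" "i \<le> n" "c = lft \<sigma> i" using memT by blast
    then show "c \<le> \<sigma> i"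
    proof cases
      case 1 then show ?thesis unfolding topset_def by auto
    next
      case 2 then show ?thesis using LC[of i] unfolding cand_def by auto
    qed
  qed
  have S4: "\<forall>(i,c)\<in>T. \<forall>i'. 1 \<le> i' \<and> i' < i \<longrightarrow> \<sigma> i' \<noteq> c"
  proof (intro ballI)
    fix p assume p: "p \<in> T"
    obtain i c where pic: "p = (i,c)" by (cases p)
    show "case p of (i, c) \<Rightarrow> \<forall>i'. 1 \<le> i' \<and> i' < i \<longrightarrow> \<sigma> i' \<noteq> c"
    unfolding pic prod.case
    proof (intro allI impI notI)
    fix i' assume i'0: "1 \<le> i' \<and> i' < i" "\<sigma> i' = c"
    have ic: "(i,c)\<in>T" using p pic by simp
    have i': "1 \<le> i'" "i' < i" "\<sigma> i' = c" using i'0 by auto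
    from ic consider "(i,c) \<in> topset n \<sigma>" | "2 \<le> i" "i \<le> n" "c = lft \<sigma> i" using memT by blast
    then show False
    proof cases
      case 1 then show ?thesis unfolding topset_def using i' by auto
    next
      case 2 then show ?thesis using LC[of i] i' unfolding cand_def by auto
    qed
    qed
  qed
  have H: "Hcond T" unfolding Hcond_def
  proof (intro ballI)
    fix p assume p: "p \<in> T"
    obtain x y where pxy: "p = (x,y)" by (cases p)
    show "case p of (i, j) \<Rightarrow> (i, j) \<noteq> (1, 1) \<longrightarrow> (\<exists>i'<i. (i', j) \<in> T) \<noteq> (\<exists>j'<j. (i, j') \<in> T)"
    unfolding pxy prod.case
    proof (intro impI)
    assume ne: "(x,y) \<noteq> (1,1)"
    have xy: "(x,y)\<in>T" using p pxy by simp
    from xy consider "(x,y) \<in> topset n \<sigma>" | "2 \<le> x" "x \<le> n" "y = lft \<sigma> x" using memT[of x y] by blast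
    then show "(\<exists>i'<x. (i', y) \<in> T) \<noteq> (\<exists>j'<y. (x, j') \<in> T)"
    proof cases
      case 1
      then have top: "x \<in> {1..n}" "1 \<le> y" "y \<le> \<sigma> x" "\<forall>i'. 1 \<le> i' \<and> i' < x \<longrightarrow> \<sigma> i' < y"
        unfolding topset_def by auto
      have noabove: "\<not>(\<exists>a<x. (a,y)\<in>T)"
      proof
        assume "\<exists>a<x. (a,y)\<in>T"
        then obtain a where a: "a < x" "(a,y)\<in>T" by blast
        from a(2) consider "(a,y) \<in> topset n \<sigma>" | "2 \<le> a" "a \<le> n" "y = lft \<sigma> a" using memT[of a y] by blast
        then show False
        proof cases
          case 1
          then have "1 \<le> a" "y \<le> \<sigma> a" unfolding topset_def by auto
          moreover have "\<sigma> a < y" using top(4) calculation(1) a(1) by blast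
          ultimately show ?thesis by simp
        next
          case 2
          then have "y \<in> cand \<sigma> a" using LC by simp
          then obtain i' where "1 \<le> i'" "i' < a" "y \<le> \<sigma> i'" unfolding cand_def by blast
          moreover have "\<sigma> i' < y" using top(4) calculation(1,2) a(1) by (meson order.strict_trans)
          ultimately show ?thesis by simp
        qed
      qed
      have left: "\<exists>j'<y. (x,j')\<in>T"
      proof (cases "x = 1")
        case True
        then have "y > 1" using ne top by auto
        then show ?thesis using S1 True by blast
      next
        case False
        then have x2: "2 \<le> x" "x \<le> n" using top by auto
        then have lx: "(x, lft \<sigma> x) \<in> T" using memT[of x "lft \<sigma> x"] by blast
        have "lft \<sigma> x \<in> cand \<sigma> x" using LC x2 by simp
        then obtain i' where "1 \<le> i'" "i' < x" "lft \<sigma> x \<le> \<sigma> i'" unfolding cand_def by blast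
        moreover have "\<sigma> i' < y" using top(4) calculation(1,2) by blast
        ultimately have "lft \<sigma> x < y" by simp
        then show ?thesis using lx by blast
      qed
      show ?thesis using noabove left by blast
    next
      case 2
      have yc: "y \<in> cand \<sigma> x" using LC 2 by simp
      have yx: "y = lft \<sigma> x" using 2 by simp
      from yc obtain i' where i': "1 \<le> i'" "i' < x" "y \<le> \<sigma> i'" unfolding cand_def by blast
      define t where "t = (LEAST t. 1 \<le> t \<and> y \<le> \<sigma> t)"
      have i'P: "1 \<le> i' \<and> y \<le> \<sigma> i'" using i'(1,3) by simp
      have t: "1 \<le> t \<and> y \<le> \<sigma> t" unfolding t_def by (rule LeastI[where P="\<lambda>t. 1 \<le> t \<and> y \<le> \<sigma> t", OF i'P])
      have tle: "t \<le> i'" unfolding t_def by (rule Least_le[where P="\<lambda>t. 1 \<le> t \<and> y \<le> \<sigma> t", OF i'P])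
      have tmin: "\<forall>i''. 1 \<le> i'' \<and> i'' < t \<longrightarrow> \<sigma> i'' < y"
      proof (intro allI impI)
        fix i'' assume h: "1 \<le> i'' \<and> i'' < t"
        then have "\<not> (1 \<le> i'' \<and> y \<le> \<sigma> i'')" unfolding t_def by (rule not_less_Least[OF conjunct2])
        then show "\<sigma> i'' < y" using h by simp
      qed
      have y1: "1 \<le> y" using yc unfolding cand_def by auto
      have tn: "t \<in> {1..n}" using t tle i'(2) 2(2) by simp
      have "(t,y) \<in> topset n \<sigma>" unfolding topset_def using t tn tmin y1 by blast
      then have tyT: "(t,y)\<in>T" using memT[of t y] by blast
      have "t < x" using tle i' by simp
      then have above: "\<exists>a<x. (a,y)\<in>T" using tyT by blast
      have noleft: "\<not>(\<exists>b<y. (x,b)\<in>T)"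
      proof
        assume "\<exists>b<y. (x,b)\<in>T"
        then obtain b where b: "b < y" "(x,b)\<in>T" by blast
        from b(2) consider "(x,b) \<in> topset n \<sigma>" | "b = lft \<sigma> x" using memT[of x b] by blast
        then show False
        proof cases
          case 1
          then have "\<sigma> i' < b" unfolding topset_def using i'(1,2) by auto
          then show ?thesis using i'(3) b(1) by simp
        next
          case 2 then show ?thesis using b yx by simp
        qed
      qed
      show ?thesis using above noleft by blast
    qed
    qed
  qed
  show ?thesis by (rule exI, rule suff[OF perm sub S1 S2 S3 S4 H])
qed

theorem theorem3p1:
  fixes n :: nat and \<sigma> :: "nat \<Rightarrow> nat"
  assumes "n \<ge> 1" and "\<sigma> permutes {1..n}"
  shows "(\<exists>M. is_cnm n M \<and> leaf_matrix M = perm_matrix n \<sigma>) \<longleftrightarrow> irreducible_perm n \<sigma>"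
proof
  assume "\<exists>M. is_cnm n M \<and> leaf_matrix M = perm_matrix n \<sigma>"
  then obtain M where M: "is_cnm n M" "leaf_matrix M = perm_matrix n \<sigma>" by blast
  show "irreducible_perm n \<sigma>" by (rule dir1[OF assms(2) M])
next
  assume "irreducible_perm n \<sigma>"
  then show "\<exists>M. is_cnm n M \<and> leaf_matrix M = perm_matrix n \<sigma>" by (rule dir2[OF assms])
qed

end
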